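(* Let $R$ be a commutative ring with identity. If $\gamma_t(\Gamma(R)) \geq 3$, then the girth of $\Gamma(R)$ is $3$.
   Context: All rings are commutative with identity. The zero-divisor graph $\Gamma(R)$ has vertex set $Z(R)^*$ (nonzero zero-divisors); distinct $r,s$ are adjacent iff $rs=0$, and $x$ is adjacent to itself iff $x^2=0$. A total dominating set is $X\subseteq Z(R)^*$ such that every vertex is adjacent to some element of $X$ (self-adjacency counts); $\gamma_t$ is its minimum cardinality. The girth is the length of a shortest cycle through distinct vertices (loops not counted), and is $\infty$ if there is no cycle. *)

theory Defs
  imports Main "HOL-Library.Extended_Nat"
begin

definition zd_vertices :: "'a::comm_ring_1 set" where
  "zd_vertices = {x. x \<noteq> 0 \<and> (\<exists>y. y \<noteq> 0 \<and> x * y = 0)}"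

text \<open>Adjacency in Gamma(R) (a vertex is adjacent to itself iff its square is zero).\<close>
definition zd_adj :: "'a::comm_ring_1 \<Rightarrow> 'a \<Rightarrow> bool" where
  "zd_adj r s \<longleftrightarrow> r \<in> zd_vertices \<and> s \<in> zd_vertices \<and> r * s = 0"

definition is_total_dominating :: "'a::comm_ring_1 set \<Rightarrow> bool" where
  "is_total_dominating X \<longleftrightarrow> X \<subseteq> zd_vertices \<and>
     (\<forall>v\<in>zd_vertices. \<exists>x\<in>X. zd_adj v x)"

definition ecard :: "'b set \<Rightarrow> enat" where
  "ecard X = (if finite X then enat (card X) else \<infinity>)"

definition total_domination_number :: "'a::comm_ring_1 itself \<Rightarrow> enat" where
  "total_domination_number _ = Inf (ecard ` {X :: 'a set. is_total_dominating X})"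

definition zd_cycle :: "nat \<Rightarrow> (nat \<Rightarrow> 'a::comm_ring_1) \<Rightarrow> bool" where
  "zd_cycle n f \<longleftrightarrow> n \<ge> 3 \<and> inj_on f {..<n} \<and>
     (\<forall>i<n. zd_adj (f i) (f ((i + 1) mod n)))"

definition zd_girth :: "'a::comm_ring_1 itself \<Rightarrow> enat" where
  "zd_girth _ = Inf {enat n | n. \<exists>f :: nat \<Rightarrow> 'a. zd_cycle n f}"

end

theory Submission
  imports Defs
begin

lemma card2: "card {a, b} \<le> 2"
  by (cases "a = b") auto

lemma dom_le:
  fixes D :: "'a::comm_ring_1 set"
  assumes "is_total_dominating D" "finite D" "card D \<le> 2"
  shows "total_domination_number TYPE('a) \<le> 2"
proof -
  have "total_domination_number TYPE('a) \<le> ecard D"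
    unfolding total_domination_number_def using assms(1) by (intro Inf_lower) auto
  also have "ecard D = enat (card D)" using assms(2) by (simp add: ecard_def)
  also have "\<dots> \<le> 2" using assms(3) by (simp add: numeral_eq_enat)
  finally show ?thesis .
qed

lemma tri_girth:
  fixes a b c :: "'a::comm_ring_1"
  assumes "a \<noteq> 0" "b \<noteq> 0" "c \<noteq> 0" "a \<noteq> b" "a \<noteq> c" "b \<noteq> c"
    "a * b = 0" "a * c = 0" "b * c = 0"
  shows "zd_girth TYPE('a) = 3"
proof -
  define f :: "nat \<Rightarrow> 'a" where "f = (\<lambda>i. if i = 0 then a else if i = 1 then b else c)"
  have ba: "b * a = 0" "c * a = 0" "c * b = 0" using assms(7-9) by (simp_all add: mult.commute)
  have V: "a \<in> zd_vertices" "b \<in> zd_vertices" "c \<in> zd_vertices"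
    unfolding zd_vertices_def using assms(1-3,7) ba by blast+
  have ad: "zd_adj a b" "zd_adj b c" "zd_adj c a"
    unfolding zd_adj_def using V assms(7,9) ba(2) by blast+
  have f0: "f 0 = a" and f1: "f 1 = b" and f2: "f 2 = c" by (simp_all add: f_def)
  have U: "{..<3::nat} = {0, 1, 2}" by auto
  have "zd_cycle 3 f"
    unfolding zd_cycle_def
  proof (intro conjI)
    show "inj_on f {..<3}" unfolding U using assms(4-6) f0 f1 f2 by simp
    show "\<forall>i<3. zd_adj (f i) (f ((i + 1) mod 3))"
    proof (intro allI impI)
      fix i :: nat assume "i < 3"
      then have "i = 0 \<or> i = 1 \<or> i = 2" by auto
      then show "zd_adj (f i) (f ((i + 1) mod 3))"
      proof (elim disjE)
        assume "i = 0" then show ?thesis using ad f0 f1 by simp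
      next
        assume "i = 1" then have "(i + 1) mod 3 = 2" by simp
        then show ?thesis using ad \<open>i = 1\<close> by (simp add: f_def)
      next
        assume "i = 2" then show ?thesis using ad f2 f0 by simp
      qed
    qed
  qed simp
  then have mem: "enat 3 \<in> {enat n | n. \<exists>f :: nat \<Rightarrow> 'a. zd_cycle n f}" by blast
  have "zd_girth TYPE('a) \<le> 3" unfolding zd_girth_def
    using Inf_lower[OF mem] by (simp add: numeral_eq_enat)
  moreover have "zd_girth TYPE('a) \<ge> 3" unfolding zd_girth_def
  proof (rule Inf_greatest)
    fix x assume "x \<in> {enat n | n. \<exists>f :: nat \<Rightarrow> 'a. zd_cycle n f}"
    then obtain n g where "x = enat n" "zd_cycle n (g :: nat \<Rightarrow> 'a)" by blast
    then have "n \<ge> 3" "x = enat n" unfolding zd_cycle_def by auto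
    then show "3 \<le> x" by (simp add: numeral_eq_enat)
  qed
  ultimately show ?thesis by (rule antisym)
qed

theorem proposition3p5:
  assumes "total_domination_number TYPE('a::comm_ring_1) \<ge> 3"
  shows "zd_girth TYPE('a) = 3"
proof (rule ccontr)
  assume ng: "zd_girth TYPE('a) \<noteq> 3"
  have NT: False if "a \<noteq> 0" "b \<noteq> 0" "c \<noteq> 0" "a \<noteq> b" "a \<noteq> c" "b \<noteq> c"
    "a * b = 0" "a * c = 0" "b * c = 0" for a b c :: 'a
    using tri_girth[OF that] ng by simp
  have "\<exists>D :: 'a set. is_total_dominating D \<and> finite D \<and> card D \<le> 2"
  proof (cases "\<exists>n::'a. n \<noteq> 0 \<and> n * n = 0")
    case True
    then obtain n :: 'a where n0: "n \<noteq> 0" and nn: "n * n = 0" by blast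
    have K: "r * n = 0 \<or> r * n = n \<or> r * n = - n" for r
    proof (rule ccontr)
      assume h: "\<not> (r * n = 0 \<or> r * n = n \<or> r * n = - n)"
      show False
      proof (cases "n = - n")
        case False
        have "n * (- n) = 0" using nn by simp
        moreover have "n * (r * n) = 0" by (metis mult.left_commute mult_zero_right nn)
        moreover have "(- n) * (r * n) = 0" using \<open>n * (r * n) = 0\<close> by simp
        ultimately show False using NT[of n "- n" "r * n"] h n0 False by auto
      next
        case True
        have a: "n * (r * n) = 0" by (metis mult.left_commute mult_zero_right nn)
        have b: "n * (n + r * n) = 0" using a nn by (simp add: distrib_left)
        have "(r * n) * (n + r * n) = r * (n * n) + r * r * (n * n)"
          by (simp add: algebra_simps)
        then have c: "(r * n) * (n + r * n) = 0" using nn by simp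
        have "n + r * n \<noteq> 0"
        proof
          assume "n + r * n = 0"
          then have "r * n + n = 0" by (simp only: add.commute)
          then show False using h eq_neg_iff_add_eq_0[of "r * n" n] by blast
        qed
        then show False using NT[of n "r * n" "n + r * n"] a b c h n0 by auto
      qed
    qed
    have A: "w * n = 0" if "r * n \<noteq> 0" "w * r = 0" for r w
    proof -
      have "w * (r * n) = 0" using that(2) by (simp add: mult.assoc[symmetric])
      then show ?thesis using K[of r] that(1) by auto
    qed
    have S: "c * c \<noteq> 0" if "c * n = 0" "c \<noteq> 0" "c \<noteq> n" "c \<noteq> - n" for c
    proof
      assume cc: "c * c = 0"
      have a: "n * c = 0" using that(1) by (simp add: mult.commute)
      have b: "n * (c + n) = 0" using a nn by (simp add: distrib_left)
      have d: "c * (c + n) = 0" using cc that(1) by (simp add: distrib_left)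
      have "c + n \<noteq> 0" using that(4) eq_neg_iff_add_eq_0[of c n] by auto
      then show False using NT[of n c "c + n"] a b d that n0 by auto
    qed
    have nV: "n \<in> zd_vertices" using n0 nn unfolding zd_vertices_def by blast
    show ?thesis
    proof (cases "\<exists>v0 \<in> zd_vertices. v0 * n \<noteq> 0")
      case True
      then obtain v0 where v0V: "v0 \<in> zd_vertices" and v0n: "v0 * n \<noteq> 0" by blast
      then obtain y0 where y00: "y0 \<noteq> 0" and vy0: "v0 * y0 = 0"
        unfolding zd_vertices_def by blast
      have v00: "v0 \<noteq> 0" using v0n by auto
      have y0n: "y0 * n = 0" using A[OF v0n, of y0] vy0 mult.commute[of y0 v0] by argo
      have y0V: "y0 \<in> zd_vertices" using y00 vy0 v00 unfolding zd_vertices_def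
        by (auto simp: mult.commute)
      have "is_total_dominating {n, y0}"
        unfolding is_total_dominating_def
      proof (intro conjI ballI)
        show "{n, y0} \<subseteq> zd_vertices" using nV y0V by auto
      next
        fix v :: 'a assume vV: "v \<in> zd_vertices"
        show "\<exists>x\<in>{n, y0}. zd_adj v x"
        proof (cases "v * n = 0")
          case True then show ?thesis using vV nV unfolding zd_adj_def by auto
        next
          case vn: False
          have "v * y0 = 0"
          proof (rule ccontr)
            assume z0: "v * y0 \<noteq> 0"
            obtain w where w0: "w \<noteq> 0" and vw: "v * w = 0"
              using vV unfolding zd_vertices_def by blast
            have wn: "w * n = 0" using A[OF vn, of w] vw mult.commute[of w v] by argo
            have wnn: "w \<noteq> n" using vw vn by (auto simp: mult.commute)
            have wmn: "w \<noteq> - n" using vw vn by (auto simp: mult.commute)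
            have ww: "w * w \<noteq> 0" using S[OF wn w0 wnn wmn] .
            define z where "z = y0 * v"
            have zz: "z \<noteq> 0" using z0 by (simp add: z_def mult.commute)
            have "n * z = v * (y0 * n)" unfolding z_def by (simp add: ac_simps)
            then have nz: "n * z = 0" using y0n by simp
            have "z * v0 = v * (v0 * y0)" unfolding z_def by (simp add: ac_simps)
            then have zv0: "z * v0 = 0" using vy0 by simp
            have znn: "z \<noteq> n" using zv0 v0n by (auto simp: mult.commute)
            have "w * z = y0 * (v * w)" unfolding z_def by (simp add: ac_simps)
            then have wz: "w * z = 0" using vw by simp
            have wzn: "w \<noteq> z" using wz ww by auto
            have nw: "n * w = 0" using wn by (simp add: mult.commute)
            show False using NT[of n w z] n0 w0 zz wnn znn wzn nw nz wz by auto
          qed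
          then show ?thesis using vV y0V unfolding zd_adj_def by auto
        qed
      qed
      then show ?thesis using card2[of n y0] by blast
    next
      case False
      have "is_total_dominating {n}"
        unfolding is_total_dominating_def zd_adj_def using False nV by auto
      then show ?thesis by fastforce
    qed
  next
    case red: False
    show ?thesis
    proof (cases "zd_vertices = ({} :: 'a set)")
      case True
      then have "is_total_dominating ({} :: 'a set)" unfolding is_total_dominating_def by auto
      then show ?thesis by fastforce
    next
      case False
      then obtain x :: 'a where xV: "x \<in> zd_vertices" by blast
      then obtain y where y0: "y \<noteq> 0" and xy: "x * y = 0" unfolding zd_vertices_def by blast
      have x0: "x \<noteq> 0" using xV unfolding zd_vertices_def by auto
      have yV: "y \<in> zd_vertices" using y0 x0 xy unfolding zd_vertices_def
        by (auto simp: mult.commute)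
      have "is_total_dominating {x, y}"
        unfolding is_total_dominating_def
      proof (intro conjI ballI)
        show "{x, y} \<subseteq> zd_vertices" using xV yV by auto
      next
        fix v :: 'a assume vV: "v \<in> zd_vertices"
        have "v * x = 0 \<or> v * y = 0"
        proof (rule ccontr)
          assume h: "\<not> (v * x = 0 \<or> v * y = 0)"
          obtain w where w0: "w \<noteq> 0" and vw: "v * w = 0"
            using vV unfolding zd_vertices_def by blast
          define a where "a = v * x"
          define b where "b = v * y"
          have a0: "a \<noteq> 0" "b \<noteq> 0" using h a_def b_def by auto
          have "a * b = v * v * (x * y)" by (simp add: a_def b_def ac_simps)
          then have ab: "a * b = 0" using xy by simp
          have "a * w = x * (v * w)" by (simp add: a_def ac_simps)
          then have aw: "a * w = 0" using vw by simp
          have "b * w = y * (v * w)" by (simp add: b_def ac_simps)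
          then have bw: "b * w = 0" using vw by simp
          have "a \<noteq> b" using ab a0 red by auto
          moreover have "a \<noteq> w" using aw a0 red by auto
          moreover have "b \<noteq> w" using bw a0 red by auto
          ultimately show False using NT[of a b w] a0 w0 ab aw bw by auto
        qed
        then show "\<exists>z\<in>{x, y}. zd_adj v z" using vV xV yV unfolding zd_adj_def by auto
      qed
      then show ?thesis using card2[of x y] by blast
    qed
  qed
  then obtain D :: "'a set" where "is_total_dominating D" "finite D" "card D \<le> 2" by blast
  from dom_le[OF this] assms have "(3::enat) \<le> 2" by (rule order_trans[rotated])
  then show False by (simp add: numeral_eq_enat)
qed

end
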